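(* Consider the system $\dot x=f(x)+Bw$, $z=Cx$ with the standing assumptions below, and a finite set of matrices $\mathcal A=\{A_1,\dots,A_k\}\subset\mathbb{R}^{n\times n}$ such that $\partial f(x)\in\operatorname{conv}\mathcal A$ for all $x\in\mathbb{R}^n$. Suppose $\eta_z,\eta_w\in\mathbb{R}$, $H\in\mathbb{R}^{m\times n}$, $P\in\mathbb{R}^{2n_z\times m}$, and $M_1,\dots,M_k\in\mathbb{R}^{m\times m}$ satisfy (i) $\eta_w>0$ and, for every $i\in\{1,\dots,k\}$: all off-diagonal entries of $M_i$ are nonnegative, $HA_i=M_iH$, and $-\eta_w\hat w_H=M_i\mathbf 1$, where $\hat w_H\in\mathbb{R}^m$ is the column vector with $j$-th entry $|B^T(H^j)^T|_1$, $H^j$ being the $j$-th row of $H$; (ii) $P\ge0$, $[C;\,-C]=PH$ (vertical stacking), $\eta_z\mathbf 1=P\mathbf 1$; and suppose $\mathcal H=\{x : Hx\le\mathbf 1\}$ is compact. Let $\mathcal X=\frac1{\eta_w}\mathcal H=\{x/\eta_w : Hx\le\mathbf 1\}$ and $\gamma_\infty=\eta_z/\eta_w$. Then for any two inputs $w_1,w_2$ with $\|w_1-w_2\|_\infty\le1$ and the corresponding solutions with $x_1(0)=x_2(0)=0$, one has $x_1(t)-x_2(t)\in\mathcal X$ for all $t\ge0$; and whenever $x_1(t)-x_2(t)\in\mathcal X$, $|z_1(t)-z_2(t)|_\infty\le\gamma_\infty$. Consequently the incremental $\mathcal L_\infty$ gain of the system is at most $\eta_z/\eta_w$, i.e. $\|z_1-z_2\|_\infty\le(\eta_z/\eta_w)\|w_1-w_2\|_\infty$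 for all inputs with $w_1-w_2\in\mathcal L_\infty$.
   Context: Standing assumptions: $f:\mathbb{R}^n\to\mathbb{R}^n$ is continuously differentiable with Jacobian $\partial f(x)$; $B\in\mathbb{R}^{n\times n_w}$, $C\in\mathbb{R}^{n_z\times n}$; every input signal $w$ yields a solution defined for all $t\ge0$ with $x(0)=0$, and $z=Cx$. $\operatorname{conv}\mathcal A=\{\sum_i\lambda_iA_i:\lambda_i\ge0,\sum_i\lambda_i=1\}$. $\mathbf 1$ is the all-ones vector; inequalities on matrices/vectors are entrywise. $|v|_1=\sum_i|v_i|$, $|v|_\infty=\max_i|v_i|$, $\|w\|_\infty=\sup_{t}|w(t)|_\infty$, and $w\in\mathcal L_\infty$ iff $\|w\|_\infty<\infty$. *)

theory Defs
  imports "HOL-Analysis.Analysis"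
begin

definition vnorm1 :: "real^'n \<Rightarrow> real" where
  "vnorm1 v = (\<Sum>i\<in>UNIV. \<bar>v $ i\<bar>)"

definition vnorm_inf :: "real^'n \<Rightarrow> real" where
  "vnorm_inf v = Max (range (\<lambda>i. \<bar>v $ i\<bar>))"

definition sig_norm_inf :: "(real \<Rightarrow> real^'n) \<Rightarrow> real" where
  "sig_norm_inf w = (SUP t\<in>{0..}. vnorm_inf (w t))"

definition in_Linf :: "(real \<Rightarrow> real^'n) \<Rightarrow> bool" where
  "in_Linf w \<longleftrightarrow> bdd_above ((\<lambda>t. vnorm_inf (w t)) ` {0..})"

definition is_solution ::
  "(real^'n \<Rightarrow> real^'n) \<Rightarrow> real^'w^'n \<Rightarrow> (real \<Rightarrow> real^'w) \<Rightarrow> (real \<Rightarrow> real^'n) \<Rightarrow> bool" where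
  "is_solution f B w x \<longleftrightarrow> x 0 = 0 \<and>
     (\<forall>t\<ge>0. ((\<lambda>s. f (x s) + B *v w s) has_integral x t) {0..t})"

definition what :: "real^'n^'m \<Rightarrow> real^'w^'n \<Rightarrow> real^'m" where
  "what H B = (\<chi> j. vnorm1 (transpose B *v (H $ j)))"

definition stackneg :: "real^'n^'z \<Rightarrow> real^'n^('z + 'z)" where
  "stackneg C = (\<chi> i. case i of Inl j \<Rightarrow> C $ j | Inr j \<Rightarrow> - (C $ j))"

definition polyH :: "real^'n^'m \<Rightarrow> (real^'n) set" where
  "polyH H = {x. \<forall>j. (H *v x) $ j \<le> 1}"

end

theory Submission
  imports Defs
begin

lemma comparison:
  fixes y :: "real \<Rightarrow> real^'m" and L :: real
  assumes cont: "\<And>T. continuous_on {0..T} y"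
    and y0: "\<And>j. y 0 $ j \<le> 1"
    and L: "L \<ge> 0"
    and step: "\<And>s t j E. 0 \<le> s \<Longrightarrow> s \<le> t \<Longrightarrow> E \<ge> 0 \<Longrightarrow>
        (\<forall>r\<in>{s..t}. 1 \<le> y r $ j \<and> (\<forall>k. y r $ k - 1 \<le> E)) \<Longrightarrow> y t $ j - y s $ j \<le> L * E * (t - s)"
  shows "\<forall>t\<ge>0. \<forall>j. y t $ j \<le> 1"
proof (rule ccontr)
  assume neg: "\<not> ?thesis"
  define U where "U = {t. 0 \<le> t \<and> (\<exists>j. y t $ j > 1)}"
  from neg obtain t0 j0 where "t0 \<ge> 0" "\<not> y t0 $ j0 \<le> 1" by auto
  hence "t0 \<in> U" unfolding U_def by (auto simp: not_le)
  hence Une: "U \<noteq> {}" by auto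
  have Ubdd: "bdd_below U" unfolding U_def by (auto intro: bdd_belowI[of _ 0])
  define \<tau> where "\<tau> = Inf U"
  have tau0: "\<tau> \<ge> 0" unfolding \<tau>_def using Une by (intro cInf_greatest) (auto simp: U_def)
  have below: "y r $ j \<le> 1" if "0 \<le> r" "r < \<tau>" for r j
  proof (rule ccontr)
    assume "\<not> y r $ j \<le> 1"
    hence "r \<in> U" using that unfolding U_def by (auto simp: not_le)
    hence "\<tau> \<le> r" unfolding \<tau>_def using Ubdd by (rule cInf_lower)
    with that show False by simp
  qed
  have ctau: "y \<tau> $ j \<le> 1" for j
  proof (rule ccontr)
    assume H: "\<not> y \<tau> $ j \<le> 1"
    have taupos: "\<tau> > 0" using H y0[of j] tau0 by (cases "\<tau> = 0") auto
    have cj: "continuous_on {0..\<tau>} (\<lambda>t. y t $ j)"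
      by (intro continuous_on_component cont) 
    have "\<forall>e>0. \<exists>d>0. \<forall>x'\<in>{0..\<tau>}. dist x' \<tau> < d \<longrightarrow> dist (y x' $ j) (y \<tau> $ j) < e"
      using cj tau0 unfolding continuous_on_iff by auto
    moreover have "y \<tau> $ j - 1 > 0" using H by simp
    ultimately obtain d where d: "d > 0" "\<And>x'. x' \<in> {0..\<tau>} \<Longrightarrow> dist x' \<tau> < d \<Longrightarrow> dist (y x' $ j) (y \<tau> $ j) < y \<tau> $ j - 1"
      by blast
    define r where "r = max 0 (\<tau> - d/2)"
    have r: "r \<in> {0..\<tau>}" "dist r \<tau> < d" "r < \<tau>" using d taupos tau0 by (auto simp: r_def dist_real_def)
    have "dist (y r $ j) (y \<tau> $ j) < y \<tau> $ j - 1" using d(2) r by blast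
    hence "y r $ j > 1" by (auto simp: dist_real_def)
    with below[of r j] r show False by auto
  qed
  define h where "h = min 1 (1 / (2 * (L + 1)))"
  have hpos: "h > 0" using L by (simp add: h_def)
  have Lh: "L * h \<le> 1/2"
  proof -
    have "h \<le> 1/(2*(L+1))" by (simp add: h_def)
    hence "L * h \<le> L * (1/(2*(L+1)))" using L by (rule mult_left_mono)
    also have "\<dots> \<le> 1/2" using L by (simp add: field_simps)
    finally show ?thesis .
  qed
  define I where "I = {\<tau>..\<tau>+h}"
  have contI: "continuous_on I y"
    unfolding I_def using tau0 by (intro continuous_on_subset[OF cont[of "\<tau>+h"]]) auto
  have "\<forall>k. \<exists>r. r \<in> I \<and> (\<forall>r'\<in>I. y r' $ k \<le> y r $ k)"
  proof
    fix k
    have "\<exists>r\<in>I. \<forall>r'\<in>I. y r' $ k \<le> y r $ k"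
      using hpos by (intro continuous_attains_sup continuous_on_component contI) (auto simp: I_def)
    thus "\<exists>r. r \<in> I \<and> (\<forall>r'\<in>I. y r' $ k \<le> y r $ k)" by blast
  qed
  then obtain rk where rk0: "\<forall>k. rk k \<in> I \<and> (\<forall>r'\<in>I. y r' $ k \<le> y (rk k) $ k)"
    by (rule choice[THEN exE])
  hence rk: "\<And>k. rk k \<in> I" "\<And>k r'. r' \<in> I \<Longrightarrow> y r' $ k \<le> y (rk k) $ k"
    by auto
  define E where "E = Max (range (\<lambda>k. max 0 (y (rk k) $ k - 1)))"
  have "max 0 (y (rk k) $ k - 1) \<le> E" for k unfolding E_def by (intro Max_ge) auto
  hence E0: "E \<ge> 0" by (meson max.bounded_iff)
  have Eb: "y r $ k - 1 \<le> E" if "r \<in> I" for r k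
  proof -
    have "y r $ k - 1 \<le> max 0 (y (rk k) $ k - 1)" using rk(2)[OF that, of k] by simp
    also have "\<dots> \<le> E" unfolding E_def by (intro Max_ge) auto
    finally show ?thesis .
  qed
  have key: "y t $ j - 1 \<le> L * E * h" if t: "t \<in> I" for t j
  proof (cases "y t $ j \<le> 1")
    case True
    have "0 \<le> L * E * h" using L E0 hpos by simp
    with True show ?thesis by linarith
  next
    case False
    define S where "S = {r \<in> {\<tau>..t}. y r $ j \<le> 1}"
    have tauS: "\<tau> \<in> S" using ctau t unfolding S_def I_def by auto
    have contt: "continuous_on {\<tau>..t} (\<lambda>r. y r $ j)"
      using contI t unfolding I_def by (intro continuous_on_component) (rule continuous_on_subset, auto)
    have "S = {\<tau>..t} \<inter> (\<lambda>r. y r $ j) -` {..1}" unfolding S_def by auto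
    hence clS: "closed S" using continuous_closed_preimage[OF contt] by simp
    have bS: "bdd_above S" unfolding S_def by (auto intro: bdd_aboveI[of _ t])
    define s where "s = Sup S"
    have sS: "s \<in> S" unfolding s_def using clS bS tauS by (intro closed_contains_Sup) auto
    have above: "y r $ j > 1" if "r \<in> {s<..t}" for r
    proof (rule ccontr)
      assume "\<not> y r $ j > 1"
      hence "r \<in> S" using that sS unfolding S_def by auto
      hence "r \<le> s" unfolding s_def using bS by (rule cSup_upper)
      with that show False by auto
    qed
    have st: "s \<le> t" "\<tau> \<le> s" using sS unfolding S_def by auto
    have "s \<noteq> t" using sS False unfolding S_def by auto
    hence st': "s < t" using st by auto
    have cst: "continuous_on {s..t} (\<lambda>r. y r $ j)" using st by (intro continuous_on_subset[OF contt]) auto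
    have "y s $ j \<le> 1" using sS unfolding S_def by simp
    then obtain s' where s': "s \<le> s'" "s' \<le> t" "y s' $ j = 1"
      using IVT'[of "\<lambda>r. y r $ j" s 1 t, OF _ _ _ cst] False st' by auto
    have "s' \<in> S" using s' st unfolding S_def by auto
    hence "s' \<le> s" unfolding s_def using bS by (rule cSup_upper)
    hence ss': "s' = s" using s' by auto
    have "y t $ j - y s $ j \<le> L * E * (t - s)"
    proof (rule step)
      show "0 \<le> s" using st tau0 by simp
      show "s \<le> t" by fact
      show "E \<ge> 0" by fact
      show "\<forall>r\<in>{s..t}. 1 \<le> y r $ j \<and> (\<forall>k. y r $ k - 1 \<le> E)"
      proof
        fix r assume r: "r \<in> {s..t}"
        have "r \<in> I" using r st t unfolding I_def by auto
        moreover have "1 \<le> y r $ j"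
          using above[of r] r s'(3) ss' by (cases "r = s") auto
        ultimately show "1 \<le> y r $ j \<and> (\<forall>k. y r $ k - 1 \<le> E)" using Eb by auto
      qed
    qed
    moreover have "L * E * (t - s) \<le> L * E * h"
      using t st L E0 unfolding I_def by (intro mult_left_mono) auto
    ultimately show ?thesis using s' ss' by simp
  qed
  obtain k0 where k0: "E = max 0 (y (rk k0) $ k0 - 1)"
  proof -
    have "E \<in> range (\<lambda>k. max 0 (y (rk k) $ k - 1))" unfolding E_def by (intro Max_in) auto
    thus ?thesis using that by auto
  qed
  have "0 \<le> L * E * h" using L E0 hpos by simp
  hence "E \<le> L * E * h" using key[OF rk(1)[of k0], of k0] k0 by linarith
  also have "\<dots> = E * (L * h)" by simp
  also have "\<dots> \<le> E * (1/2)" using Lh E0 by (rule mult_left_mono)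
  finally have E00: "E = 0" using E0 by simp
  obtain u where u: "u \<in> U" "u < \<tau> + h"
    using cInf_lessD[OF Une, of "\<tau> + h"] hpos unfolding \<tau>_def by auto
  have "\<tau> \<le> u" unfolding \<tau>_def by (rule cInf_lower[OF u(1) Ubdd])
  hence uI: "u \<in> I" using u unfolding I_def by auto
  from u(1) obtain j where "y u $ j > 1" unfolding U_def by auto
  with Eb[OF uI, of j] E00 show False by simp
qed

lemma mat_lin_comb:
  fixes H :: "real^'n^'m" and X Y :: "real^'n^'n" and P Q :: "real^'m^'m"
  shows "H ** (u *\<^sub>R X + v *\<^sub>R Y) = u *\<^sub>R (H ** X) + v *\<^sub>R (H ** Y)"
    and "(u *\<^sub>R P + v *\<^sub>R Q) ** H = u *\<^sub>R (P ** H) + v *\<^sub>R (Q ** H)"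
    and "(u *\<^sub>R P + v *\<^sub>R Q) *v z = u *\<^sub>R (P *v z) + v *\<^sub>R (Q *v z)"
  by (simp_all add: matrix_matrix_mult_def matrix_vector_mult_def vec_eq_iff
      sum_distrib_left sum.distrib algebra_simps)

lemma hull_M:
  fixes A :: "'k::finite \<Rightarrow> real^'n^'n" and M :: "'k \<Rightarrow> real^'m^'m"
    and H :: "real^'n^'m" and wh :: "real^'m"
  assumes M_metzler: "\<And>i a b. a \<noteq> b \<Longrightarrow> M i $ a $ b \<ge> 0"
    and HA: "\<And>i. H ** A i = M i ** H"
    and M_one: "\<And>i. M i *v vec 1 = wh"
    and K: "\<And>i a b. \<bar>M i $ a $ b\<bar> \<le> K"
    and D: "D \<in> convex hull (range A)"
  shows "\<exists>Mb. H ** D = Mb ** H \<and> Mb *v vec 1 = wh \<and> (\<forall>a b. a \<noteq> b \<longrightarrow> 0 \<le> Mb $ a $ b)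
            \<and> (\<forall>a b. \<bar>Mb $ a $ b\<bar> \<le> K)"
proof -
  define Q where "Q = {D. \<exists>Mb. H ** D = Mb ** H \<and> Mb *v vec 1 = wh \<and> (\<forall>a b. a \<noteq> b \<longrightarrow> 0 \<le> Mb $ a $ b)
            \<and> (\<forall>a b. \<bar>Mb $ a $ b\<bar> \<le> K)}"
  have "range A \<subseteq> Q"
  proof
    fix D assume "D \<in> range A"
    then obtain i where "D = A i" by auto
    thus "D \<in> Q" unfolding Q_def using M_metzler[of _ _ i] HA[of i] M_one[of i] K[of i] by (intro CollectI exI[of _ "M i"]) auto
  qed
  moreover have "convex Q"
    unfolding convex_def
  proof (intro ballI allI impI)
    fix x y and u v :: real
    assume x: "x \<in> Q" and y: "y \<in> Q" and uv: "0 \<le> u" "0 \<le> v" "u + v = 1"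
    from x obtain M1 where M1: "H ** x = M1 ** H" "M1 *v vec 1 = wh" "\<forall>a b. a \<noteq> b \<longrightarrow> 0 \<le> M1 $ a $ b"
       "\<forall>a b. \<bar>M1 $ a $ b\<bar> \<le> K" unfolding Q_def by blast
    from y obtain M2 where M2: "H ** y = M2 ** H" "M2 *v vec 1 = wh" "\<forall>a b. a \<noteq> b \<longrightarrow> 0 \<le> M2 $ a $ b"
       "\<forall>a b. \<bar>M2 $ a $ b\<bar> \<le> K" unfolding Q_def by blast
    define Mb where "Mb = u *\<^sub>R M1 + v *\<^sub>R M2"
    have "H ** (u *\<^sub>R x + v *\<^sub>R y) = Mb ** H"
      unfolding Mb_def mat_lin_comb M1 M2 ..
    moreover have "Mb *v vec 1 = wh"
      unfolding Mb_def mat_lin_comb M1 M2 using uv by (simp add: scaleR_left_distrib[symmetric])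
    moreover have "\<forall>a b. a \<noteq> b \<longrightarrow> 0 \<le> Mb $ a $ b"
      using M1(3) M2(3) uv unfolding Mb_def by simp
    moreover have "\<forall>a b. \<bar>Mb $ a $ b\<bar> \<le> K"
    proof (intro allI)
      fix a b
      have "\<bar>Mb $ a $ b\<bar> \<le> u * \<bar>M1 $ a $ b\<bar> + v * \<bar>M2 $ a $ b\<bar>"
        unfolding Mb_def using uv by (simp add: abs_triangle_ineq[THEN order_trans] abs_mult)
      also have "\<dots> \<le> u * K + v * K" using uv M1(4) M2(4)
        by (intro add_mono mult_left_mono) auto
      also have "\<dots> = K" using uv by (simp add: distrib_right[symmetric])
      finally show "\<bar>Mb $ a $ b\<bar> \<le> K" .
    qed
    ultimately show "u *\<^sub>R x + v *\<^sub>R y \<in> Q" unfolding Q_def by blast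
  qed
  ultimately have "convex hull (range A) \<subseteq> Q" by (rule hull_minimal)
  with D show ?thesis unfolding Q_def by blast
qed

lemma HB_bound:
  fixes H :: "real^'n^'m" and B :: "real^'w^'n"
  shows "(H *v (B *v \<delta>)) $ j \<le> what H B $ j * vnorm_inf \<delta>"
proof -
  have nb: "\<bar>\<delta> $ l\<bar> \<le> vnorm_inf \<delta>" for l unfolding vnorm_inf_def by (intro Max_ge) auto
  have "(H *v (B *v \<delta>)) $ j = (\<Sum>l\<in>UNIV. (transpose B *v (H $ j)) $ l * \<delta> $ l)"
    unfolding matrix_vector_mult_def transpose_def
    by (simp add: sum_distrib_left sum_distrib_right mult_ac) (rule sum.swap)
  also have "\<dots> \<le> (\<Sum>l\<in>UNIV. \<bar>(transpose B *v (H $ j)) $ l\<bar> * vnorm_inf \<delta>)"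
  proof (rule sum_mono)
    fix l
    have "(transpose B *v (H $ j)) $ l * \<delta> $ l \<le> \<bar>(transpose B *v (H $ j)) $ l\<bar> * \<bar>\<delta> $ l\<bar>"
      by (metis abs_ge_self abs_mult)
    also have "\<dots> \<le> \<bar>(transpose B *v (H $ j)) $ l\<bar> * vnorm_inf \<delta>"
      by (intro mult_left_mono nb) auto
    finally show "(transpose B *v (H $ j)) $ l * \<delta> $ l \<le> \<bar>(transpose B *v (H $ j)) $ l\<bar> * vnorm_inf \<delta>" .
  qed
  also have "\<dots> = what H B $ j * vnorm_inf \<delta>"
    by (simp add: what_def vnorm1_def sum_distrib_right)
  finally show ?thesis .
qed

lemma what_nonneg: "what H B $ j \<ge> 0"
  by (simp add: what_def vnorm1_def sum_nonneg)


lemma pw: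
  fixes f :: "real^'n \<Rightarrow> real^'n"
    and Df :: "real^'n \<Rightarrow> real^'n^'n"
    and B :: "real^'w^'n"
    and H :: "real^'n^'m"
  assumes f_deriv: "\<And>x. (f has_derivative (\<lambda>h. Df x *v h)) (at x)"
    and Mex: "\<And>x. \<exists>Mb. H ** Df x = Mb ** H \<and> Mb *v vec 1 = - \<eta>w *\<^sub>R what H B \<and>
           (\<forall>a b. a \<noteq> b \<longrightarrow> 0 \<le> Mb $ a $ b) \<and> (\<forall>a b. \<bar>Mb $ a $ b\<bar> \<le> K)"
    and gam: "\<gamma> > 0" and etaw: "\<eta>w > 0"
    and dl: "vnorm_inf \<delta> \<le> \<gamma>"
    and yj: "1 \<le> (\<eta>w / \<gamma>) * (H *v (a - b)) $ j"
    and yk: "\<And>k. (\<eta>w / \<gamma>) * (H *v (a - b)) $ k - 1 \<le> E"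
    and E0: "E \<ge> 0"
  shows "(\<eta>w / \<gamma>) * (H *v (f a - f b + B *v \<delta>)) $ j \<le> real CARD('m) * K * E"
proof -
  define v where "v = a - b"
  define c where "c = \<eta>w / \<gamma>"
  have c0: "c > 0" using gam etaw by (simp add: c_def)
  define \<phi> where "\<phi> = (\<lambda>u::real. (H *v f (b + u *\<^sub>R v)) $ j)"
  have bl: "bounded_linear (\<lambda>z::real^'m. z $ j)" by (rule bounded_linear_vec_nth)
  have bl2: "bounded_linear (\<lambda>z. (H *v z) $ j)"
    by (rule bounded_linear_compose[OF bl matrix_vector_mul_bounded_linear])
  have der: "(\<phi> has_derivative (\<lambda>h. (H *v (Df (b + u *\<^sub>R v) *v (h *\<^sub>R v))) $ j)) (at u within {0..1})" for u
  proof -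
    have d1: "((\<lambda>u. b + u *\<^sub>R v) has_derivative (\<lambda>h. h *\<^sub>R v)) (at u within {0..1})"
      by (auto intro!: derivative_eq_intros)
    have d2: "((\<lambda>u. f (b + u *\<^sub>R v)) has_derivative (\<lambda>h. Df (b + u *\<^sub>R v) *v (h *\<^sub>R v))) (at u within {0..1})"
      using has_derivative_compose[OF d1 f_deriv] .
    show ?thesis unfolding \<phi>_def using bounded_linear.has_derivative[OF bl2 d2] .
  qed
  have ex0: "\<exists>x\<in>{0<..<1}. \<phi> 1 - \<phi> 0 = (\<lambda>u h. (H *v (Df (b + u *\<^sub>R v) *v (h *\<^sub>R v))) $ j) x (1 - 0)"
    apply (rule mvt_simple)
     apply simp
    apply (rule der)
    done
  have ex: "\<exists>x\<in>{0<..<1}. \<phi> 1 - \<phi> 0 = (H *v (Df (b + x *\<^sub>R v) *v v)) $ j"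
    using ex0 by simp
  then obtain \<xi> where mv: "\<phi> 1 - \<phi> 0 = (H *v (Df (b + \<xi> *\<^sub>R v) *v v)) $ j"
    by blast
  obtain Mb where MbA: "H ** Df (b + \<xi> *\<^sub>R v) = Mb ** H \<and> Mb *v vec 1 = - \<eta>w *\<^sub>R what H B \<and>
    (\<forall>a b. a \<noteq> b \<longrightarrow> 0 \<le> Mb $ a $ b) \<and> (\<forall>a b. \<bar>Mb $ a $ b\<bar> \<le> K)"
    using Mex[of "b + \<xi> *\<^sub>R v"] by (rule exE)
  note Mb = MbA[THEN conjunct1] MbA[THEN conjunct2, THEN conjunct1]
     MbA[THEN conjunct2, THEN conjunct2, THEN conjunct1] MbA[THEN conjunct2, THEN conjunct2, THEN conjunct2]
  define yv where "yv = c *\<^sub>R (H *v v)"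
  have "(H *v (f a - f b)) $ j = \<phi> 1 - \<phi> 0"
    unfolding \<phi>_def v_def by (simp add: matrix_vector_mult_diff_distrib)
  also have "\<dots> = (Mb *v (H *v v)) $ j"
    unfolding mv by (simp add: matrix_vector_mul_assoc Mb(1))
  finally have T1: "c * (H *v (f a - f b)) $ j = (\<Sum>k\<in>UNIV. Mb $ j $ k * yv $ k)"
    unfolding yv_def by (simp add: matrix_vector_mult_def sum_distrib_left mult_ac)
  have T2: "c * (H *v (B *v \<delta>)) $ j \<le> \<eta>w * what H B $ j"
  proof -
    have "c * (H *v (B *v \<delta>)) $ j \<le> c * (what H B $ j * vnorm_inf \<delta>)"
      using c0 HB_bound by (intro mult_left_mono) auto
    also have "\<dots> \<le> c * (what H B $ j * \<gamma>)"
      using c0 what_nonneg dl by (intro mult_left_mono) auto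
    also have "\<dots> = \<eta>w * what H B $ j" using gam by (simp add: c_def)
    finally show ?thesis .
  qed
  have T3: "\<eta>w * what H B $ j = - (\<Sum>k\<in>UNIV. Mb $ j $ k)"
  proof -
    have "(Mb *v vec 1) $ j = (- \<eta>w *\<^sub>R what H B) $ j" using Mb(2) by simp
    thus ?thesis by (simp add: matrix_vector_mult_def)
  qed
  have yvk: "yv $ k = c * (H *v (a - b)) $ k" for k unfolding yv_def v_def by simp
  have "c * (H *v (f a - f b + B *v \<delta>)) $ j = c * (H *v (f a - f b)) $ j + c * (H *v (B *v \<delta>)) $ j"
    by (simp add: matrix_vector_right_distrib distrib_left)
  also have "\<dots> \<le> (\<Sum>k\<in>UNIV. Mb $ j $ k * yv $ k) - (\<Sum>k\<in>UNIV. Mb $ j $ k)"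
    using T1 T2 T3 by linarith
  also have "\<dots> = (\<Sum>k\<in>UNIV. Mb $ j $ k * (yv $ k - 1))"
    by (simp add: sum_subtractf right_diff_distrib)
  also have "\<dots> \<le> (\<Sum>k\<in>(UNIV::'m set). K * E)"
  proof (rule sum_mono)
    fix k
    have e1: "yv $ k - 1 \<le> E" using yk[of k] yvk[of k] c_def by simp
    show "Mb $ j $ k * (yv $ k - 1) \<le> K * E"
    proof (cases "k = j")
      case True
      have e2: "0 \<le> yv $ k - 1" using yj yvk[of k] True c_def by simp
      have prev: "Mb $ j $ k * (yv $ k - 1) \<le> \<bar>Mb $ j $ k\<bar> * (yv $ k - 1)"
        using e2 by (intro mult_right_mono) auto
      have Kjk: "\<bar>Mb $ j $ k\<bar> \<le> K" using Mb(4) by blast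
      have K0: "0 \<le> K" using Kjk abs_ge_zero[of "Mb $ j $ k"] by linarith
      have "\<bar>Mb $ j $ k\<bar> * (yv $ k - 1) \<le> K * E" using Kjk e1 e2 K0 by (intro mult_mono) auto
      with prev show ?thesis by linarith
    next
      case False
      have m0: "0 \<le> Mb $ j $ k" using Mb(3) False by auto
      have q1: "Mb $ j $ k * (yv $ k - 1) \<le> Mb $ j $ k * E" using e1 m0 by (rule mult_left_mono)
      have Kjk: "\<bar>Mb $ j $ k\<bar> \<le> K" using Mb(4) by blast
      hence "Mb $ j $ k \<le> K" by linarith
      hence "Mb $ j $ k * E \<le> K * E" using E0 by (rule mult_right_mono)
      with q1 show ?thesis by linarith
    qed
  qed
  also have "\<dots> = real CARD('m) * K * E" by simp
  finally show ?thesis unfolding c_def .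
qed

lemma invariance:
  fixes f :: "real^'n \<Rightarrow> real^'n"
    and Df :: "real^'n \<Rightarrow> real^'n^'n"
    and B :: "real^'w^'n"
    and H :: "real^'n^'m"
  assumes f_deriv: "\<And>x. (f has_derivative (\<lambda>h. Df x *v h)) (at x)"
    and Mex: "\<And>x. \<exists>Mb. H ** Df x = Mb ** H \<and> Mb *v vec 1 = - \<eta>w *\<^sub>R what H B \<and>
           (\<forall>a b. a \<noteq> b \<longrightarrow> 0 \<le> Mb $ a $ b) \<and> (\<forall>a b. \<bar>Mb $ a $ b\<bar> \<le> K)"
    and gam: "\<gamma> > 0" and etaw: "\<eta>w > 0"
    and s1: "is_solution f B w1 x1" and s2: "is_solution f B w2 x2"
    and dw: "\<And>t. t \<ge> 0 \<Longrightarrow> vnorm_inf (w1 t - w2 t) \<le> \<gamma>"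
  shows "\<forall>t\<ge>0. \<forall>j. (\<eta>w / \<gamma>) * (H *v (x1 t - x2 t)) $ j \<le> 1"
proof -
  define c where "c = \<eta>w / \<gamma>"
  define G1 where "G1 = (\<lambda>s. f (x1 s) + B *v w1 s)"
  define G2 where "G2 = (\<lambda>s. f (x2 s) + B *v w2 s)"
  have x10: "x1 0 = 0" and x20: "x2 0 = 0" using s1 s2 unfolding is_solution_def by auto
  have hi1: "(G1 has_integral x1 t) {0..t}" if "t \<ge> 0" for t
    using s1 that unfolding is_solution_def G1_def by auto
  have hi2: "(G2 has_integral x2 t) {0..t}" if "t \<ge> 0" for t
    using s2 that unfolding is_solution_def G2_def by auto
  have int1: "G1 integrable_on {0..t}" "integral {0..t} G1 = x1 t" if "t \<ge> 0" for t
    using hi1[OF that] by (auto simp: has_integral_iff)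
  have int2: "G2 integrable_on {0..t}" "integral {0..t} G2 = x2 t" if "t \<ge> 0" for t
    using hi2[OF that] by (auto simp: has_integral_iff)
  obtain Mb0 :: "real^'m^'m" where "\<forall>a b. \<bar>Mb0 $ a $ b\<bar> \<le> K" using Mex[of 0] by blast
  hence K0: "K \<ge> 0" by (meson abs_ge_zero order_trans)
  define L where "L = real CARD('m) * K"
  have L0: "L \<ge> 0" using K0 by (simp add: L_def)
  define y where "y = (\<lambda>t. c *\<^sub>R (H *v (x1 t - x2 t)))"
  have yk: "y t $ k = c * (H *v (x1 t - x2 t)) $ k" for t k by (simp add: y_def)
  have bl: "bounded_linear (\<lambda>z. c *\<^sub>R (H *v z))"
    by (intro bounded_linear_compose[OF bounded_linear_scaleR_right matrix_vector_mul_bounded_linear])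
  have cont: "continuous_on {0..T} y" for T
  proof (cases "T \<ge> 0")
    case False thus ?thesis by simp
  next
    case True
    have c1: "continuous_on {0..T} x1"
    proof -
      have "continuous_on {0..T} (\<lambda>t. integral {0..t} G1)"
        by (rule indefinite_integral_continuous_1) (rule int1(1)[OF True])
      thus ?thesis by (rule continuous_on_eq) (auto simp: int1(2))
    qed
    have c2: "continuous_on {0..T} x2"
    proof -
      have "continuous_on {0..T} (\<lambda>t. integral {0..t} G2)"
        by (rule indefinite_integral_continuous_1) (rule int2(1)[OF True])
      thus ?thesis by (rule continuous_on_eq) (auto simp: int2(2))
    qed
    have "continuous_on {0..T} (\<lambda>t. x1 t - x2 t)" using c1 c2 by (rule continuous_on_diff)
    thus ?thesis unfolding y_def by (rule bounded_linear.continuous_on[OF bl])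
  qed
  have y0: "y 0 $ j \<le> 1" for j by (simp add: y_def x10 x20)
  have step: "y t $ j - y s $ j \<le> L * E * (t - s)"
    if st: "0 \<le> s" "s \<le> t" and E0: "E \<ge> 0"
      and hyp: "\<forall>r\<in>{s..t}. 1 \<le> y r $ j \<and> (\<forall>k. y r $ k - 1 \<le> E)" for s t j E
  proof -
    have t0: "0 \<le> t" using st by simp
    define g where "g = (\<lambda>r. G1 r - G2 r)"
    have gi0: "g integrable_on {0..t}" unfolding g_def using int1(1)[OF t0] int2(1)[OF t0] by (rule integrable_diff)
    have gi: "g integrable_on {s..t}" using gi0 by (rule integrable_on_subinterval) (use st in auto)
    have comb1: "integral {0..s} G1 + integral {s..t} G1 = integral {0..t} G1"
      using st int1(1)[OF t0] by (intro Henstock_Kurzweil_Integration.integral_combine) auto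
    have comb2: "integral {0..s} G2 + integral {s..t} G2 = integral {0..t} G2"
      using st int2(1)[OF t0] by (intro Henstock_Kurzweil_Integration.integral_combine) auto
    have G1i: "G1 integrable_on {s..t}" using int1(1)[OF t0] by (rule integrable_on_subinterval) (use st in auto)
    have G2i: "G2 integrable_on {s..t}" using int2(1)[OF t0] by (rule integrable_on_subinterval) (use st in auto)
    have e1: "x1 t - x1 s = integral {s..t} G1"
      using comb1 int1(2)[OF t0] int1(2)[OF st(1)] by (metis add_diff_cancel_left')
    have e2: "x2 t - x2 s = integral {s..t} G2"
      using comb2 int2(2)[OF t0] int2(2)[OF st(1)] by (metis add_diff_cancel_left')
    have e3: "integral {s..t} g = integral {s..t} G1 - integral {s..t} G2"
      unfolding g_def by (rule integral_diff[OF G1i G2i])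
    have "(x1 t - x2 t) - (x1 s - x2 s) = (x1 t - x1 s) - (x2 t - x2 s)" by (simp add: algebra_simps)
    hence "(x1 t - x2 t) - (x1 s - x2 s) = integral {s..t} g" unfolding e1 e2 e3 .
    moreover have "y t - y s = c *\<^sub>R (H *v ((x1 t - x2 t) - (x1 s - x2 s)))"
      unfolding y_def by (simp only: matrix_vector_mult_diff_distrib scaleR_diff_right)
    ultimately have "y t - y s = c *\<^sub>R (H *v integral {s..t} g)" by simp
    hence "y t $ j - y s $ j = c * (H *v integral {s..t} g) $ j" by (metis vector_minus_component vector_scaleR_component real_scaleR_def)
    also have "\<dots> = integral {s..t} (\<lambda>r. c * (H *v g r) $ j)"
    proof -
      have blj: "bounded_linear (\<lambda>z. c * (H *v z) $ j)"
        by (rule bounded_linear_compose[OF bounded_linear_mult_right[of c] bounded_linear_compose[OF bounded_linear_vec_nth matrix_vector_mul_bounded_linear]])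
      show ?thesis using integral_linear[OF gi blj] unfolding o_def by (rule sym)
    qed
    also have "\<dots> \<le> integral {s..t} (\<lambda>r. L * E)"
    proof (rule integral_le)
      have blj: "bounded_linear (\<lambda>z. c * (H *v z) $ j)"
        by (rule bounded_linear_compose[OF bounded_linear_mult_right[of c] bounded_linear_compose[OF bounded_linear_vec_nth matrix_vector_mul_bounded_linear]])
      show "(\<lambda>r. c * (H *v g r) $ j) integrable_on {s..t}"
        using integrable_linear[OF gi blj] by (simp add: o_def)
      show "(\<lambda>r. L * E) integrable_on {s..t}" by (rule Henstock_Kurzweil_Integration.integrable_const_ivl)
      fix r assume r: "r \<in> {s..t}"
      have "g r = f (x1 r) - f (x2 r) + B *v (w1 r - w2 r)"
        unfolding g_def G1_def G2_def by (simp add: matrix_vector_mult_diff_distrib algebra_simps)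
      moreover have "c * (H *v (f (x1 r) - f (x2 r) + B *v (w1 r - w2 r))) $ j \<le> real CARD('m) * K * E"
        unfolding c_def
      proof (rule pw[OF f_deriv Mex gam etaw])
        show "vnorm_inf (w1 r - w2 r) \<le> \<gamma>" using dw r st by auto
        show "1 \<le> \<eta>w / \<gamma> * (H *v (x1 r - x2 r)) $ j" using hyp r yk c_def by auto
        show "\<eta>w / \<gamma> * (H *v (x1 r - x2 r)) $ k - 1 \<le> E" for k using hyp r yk c_def by auto
        show "0 \<le> E" by fact
      qed
      ultimately show "c * (H *v g r) $ j \<le> L * E" by (simp add: L_def)
    qed
    also have "\<dots> = L * E * (t - s)" using st by simp
    finally show ?thesis .
  qed
  have "\<forall>t\<ge>0. \<forall>j. y t $ j \<le> 1"
    by (rule comparison[OF cont y0 L0 step])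
  thus ?thesis using yk c_def by simp
qed

lemma vnorm_inf_le_iff: "vnorm_inf v \<le> b \<longleftrightarrow> (\<forall>i. \<bar>v $ i\<bar> \<le> b)"
  unfolding vnorm_inf_def by (subst Max_le_iff) auto

lemma vnorm_inf_nonneg: "vnorm_inf v \<ge> 0"
proof -
  obtain i :: 'a where True by blast
  have "\<bar>v $ i\<bar> \<le> vnorm_inf v" unfolding vnorm_inf_def by (intro Max_ge) auto
  thus ?thesis by (meson abs_ge_zero order_trans)
qed

lemma out_bound:
  fixes C :: "real^'n^'z" and H :: "real^'n^'m" and P :: "real^'m^('z + 'z)"
  assumes P_nonneg: "\<And>a b. P $ a $ b \<ge> 0"
    and CPH: "stackneg C = P ** H"
    and P_one: "\<eta>z *\<^sub>R vec 1 = P *v vec 1"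
    and gam: "\<gamma> > 0" and etaw: "\<eta>w > 0"
    and hd: "\<forall>j. (\<eta>w / \<gamma>) * (H *v d) $ j \<le> 1"
  shows "vnorm_inf (C *v d) \<le> \<eta>z * \<gamma> / \<eta>w"
proof -
  define x where "x = (\<eta>w / \<gamma>) *\<^sub>R d"
  have hx: "(H *v x) $ j \<le> 1" for j using hd unfolding x_def by (simp add: matrix_vector_mult_scaleR)
  have px: "(stackneg C *v x) $ i \<le> \<eta>z" for i
  proof -
    have "(stackneg C *v x) $ i = (P *v (H *v x)) $ i" by (simp add: CPH matrix_vector_mul_assoc)
    also have "\<dots> = (\<Sum>k\<in>UNIV. P $ i $ k * (H *v x) $ k)" by (simp add: matrix_vector_mult_def)
    also have "\<dots> \<le> (\<Sum>k\<in>UNIV. P $ i $ k * 1)"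
      by (intro sum_mono mult_left_mono hx P_nonneg)
    also have "\<dots> = (P *v vec 1) $ i" by (simp add: matrix_vector_mult_def)
    also have "\<dots> = \<eta>z" using P_one[symmetric] by (metis vector_scaleR_component vec_component real_scaleR_def mult.right_neutral)
    finally show ?thesis .
  qed
  have cx: "\<bar>(C *v x) $ j\<bar> \<le> \<eta>z" for j
  proof -
    have "(stackneg C *v x) $ Inl j = (C *v x) $ j"
      by (simp add: stackneg_def matrix_vector_mult_def)
    moreover have "(stackneg C *v x) $ Inr j = - (C *v x) $ j"
      by (simp add: stackneg_def matrix_vector_mult_def sum_negf)
    ultimately show ?thesis using px[of "Inl j"] px[of "Inr j"] by linarith
  qed
  have cd: "C *v d = (\<gamma> / \<eta>w) *\<^sub>R (C *v x)"
    unfolding x_def using gam etaw by (simp add: matrix_vector_mult_scaleR)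
  show ?thesis unfolding vnorm_inf_le_iff
  proof
    fix j
    have "\<bar>(C *v d) $ j\<bar> = (\<gamma> / \<eta>w) * \<bar>(C *v x) $ j\<bar>"
      unfolding cd using gam etaw by (simp add: abs_mult)
    also have "\<dots> \<le> (\<gamma> / \<eta>w) * \<eta>z" using gam etaw cx[of j] by (intro mult_left_mono) auto
    finally show "\<bar>(C *v d) $ j\<bar> \<le> \<eta>z * \<gamma> / \<eta>w" by (simp add: mult.commute)
  qed
qed

lemma lim_le:
  fixes a c S :: real
  assumes c: "c \<ge> 0" and h: "\<And>\<gamma>. \<gamma> > S \<Longrightarrow> a \<le> c * \<gamma>"
  shows "a \<le> c * S"
proof (rule ccontr)
  assume n: "\<not> a \<le> c * S"
  show False
  proof (cases "c = 0")
    case True thus False using h[of "S+1"] n by simp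
  next
    case False
    hence cp: "c > 0" using c by simp
    define g where "g = (a / c + S) / 2"
    have "a / c > S" using n cp by (simp add: field_simps)
    hence "g > S" by (simp add: g_def)
    hence "a \<le> c * g" by (rule h)
    also have "c * g = (a + c * S) / 2" using cp by (simp add: g_def field_simps)
    finally show False using n by simp
  qed
qed

theorem theorem2:
  fixes f :: "real^'n \<Rightarrow> real^'n"
    and Df :: "real^'n \<Rightarrow> real^'n^'n"
    and B :: "real^'w^'n" and C :: "real^'n^'z"
    and A :: "'k::finite \<Rightarrow> real^'n^'n"
    and M :: "'k \<Rightarrow> real^'m^'m"
    and H :: "real^'n^'m" and P :: "real^'m^('z + 'z)"
    and \<eta>z \<eta>w :: real
  assumes f_deriv: "\<And>x. (f has_derivative (\<lambda>h. Df x *v h)) (at x)"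
    and Df_cont: "continuous_on UNIV Df"
    and jac_conv: "\<And>x. Df x \<in> convex hull (range A)"
    and eta_w_pos: "\<eta>w > 0"
    and M_metzler: "\<And>i a b. a \<noteq> b \<Longrightarrow> M i $ a $ b \<ge> 0"
    and HA: "\<And>i. H ** A i = M i ** H"
    and M_one: "\<And>i. - \<eta>w *\<^sub>R what H B = M i *v vec 1"
    and P_nonneg: "\<And>a b. P $ a $ b \<ge> 0"
    and CPH: "stackneg C = P ** H"
    and P_one: "\<eta>z *\<^sub>R vec 1 = P *v vec 1"
    and H_compact: "compact (polyH H)"
  shows
    "(\<forall>w1 w2 x1 x2. is_solution f B w1 x1 \<and> is_solution f B w2 x2 \<and>
         in_Linf (\<lambda>t. w1 t - w2 t) \<and> sig_norm_inf (\<lambda>t. w1 t - w2 t) \<le> 1 \<longrightarrow>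
         (\<forall>t\<ge>0. x1 t - x2 t \<in> (\<lambda>x. x /\<^sub>R \<eta>w) ` polyH H))
   \<and> (\<forall>w1 w2 x1 x2 t. is_solution f B w1 x1 \<and> is_solution f B w2 x2 \<and> t \<ge> 0 \<and>
         x1 t - x2 t \<in> (\<lambda>x. x /\<^sub>R \<eta>w) ` polyH H \<longrightarrow>
         vnorm_inf (C *v x1 t - C *v x2 t) \<le> \<eta>z / \<eta>w)
   \<and> (\<forall>w1 w2 x1 x2. is_solution f B w1 x1 \<and> is_solution f B w2 x2 \<and>
         in_Linf (\<lambda>t. w1 t - w2 t) \<longrightarrow>
         in_Linf (\<lambda>t. C *v x1 t - C *v x2 t) \<and>
         sig_norm_inf (\<lambda>t. C *v x1 t - C *v x2 t) \<le> \<eta>z / \<eta>w * sig_norm_inf (\<lambda>t. w1 t - w2 t))"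
proof -
  define K where "K = Max (range (\<lambda>(i, a, b). \<bar>M i $ a $ b\<bar>))"
  have Kb: "\<bar>M i $ a $ b\<bar> \<le> K" for i a b
  proof -
    have "(\<lambda>(i, a, b). \<bar>M i $ a $ b\<bar>) (i, a, b) \<le> K" unfolding K_def by (intro Max_ge) (auto intro: rev_image_eqI[of "(i, a, b)"])
    thus ?thesis by simp
  qed
  have Mex: "\<exists>Mb. H ** Df x = Mb ** H \<and> Mb *v vec 1 = - \<eta>w *\<^sub>R what H B \<and>
           (\<forall>a b. a \<noteq> b \<longrightarrow> 0 \<le> Mb $ a $ b) \<and> (\<forall>a b. \<bar>Mb $ a $ b\<bar> \<le> K)" for x
    by (rule hull_M[OF M_metzler HA M_one[symmetric] Kb jac_conv])
  have inv: "\<forall>t\<ge>0. \<forall>j. (\<eta>w / \<gamma>) * (H *v (x1 t - x2 t)) $ j \<le> 1"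
    if "\<gamma> > 0" "is_solution f B w1 x1" "is_solution f B w2 x2"
       "\<And>t. t \<ge> 0 \<Longrightarrow> vnorm_inf (w1 t - w2 t) \<le> \<gamma>" for \<gamma> w1 w2 x1 x2
    by (rule invariance[OF f_deriv Mex that(1) eta_w_pos that(2,3,4)])
  have P1: "\<forall>w1 w2 x1 x2. is_solution f B w1 x1 \<and> is_solution f B w2 x2 \<and>
         in_Linf (\<lambda>t. w1 t - w2 t) \<and> sig_norm_inf (\<lambda>t. w1 t - w2 t) \<le> 1 \<longrightarrow>
         (\<forall>t\<ge>0. x1 t - x2 t \<in> (\<lambda>x. x /\<^sub>R \<eta>w) ` polyH H)"
  proof (intro allI impI)
    fix w1 w2 x1 x2 and t :: real
    assume a: "is_solution f B w1 x1 \<and> is_solution f B w2 x2 \<and>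
         in_Linf (\<lambda>t. w1 t - w2 t) \<and> sig_norm_inf (\<lambda>t. w1 t - w2 t) \<le> 1"
      and t: "t \<ge> 0"
    have dw: "vnorm_inf (w1 t - w2 t) \<le> 1" if "t \<ge> 0" for t
    proof -
      have "vnorm_inf (w1 t - w2 t) \<le> sig_norm_inf (\<lambda>t. w1 t - w2 t)"
        unfolding sig_norm_inf_def using a that unfolding in_Linf_def
        by (intro cSUP_upper) auto
      thus ?thesis using a by linarith
    qed
    have i1: "\<forall>t\<ge>0. \<forall>j. (\<eta>w / 1) * (H *v (x1 t - x2 t)) $ j \<le> 1"
      using a dw by (intro inv) auto
    show "x1 t - x2 t \<in> (\<lambda>x. x /\<^sub>R \<eta>w) ` polyH H"
    proof -
      have "\<eta>w *\<^sub>R (x1 t - x2 t) \<in> polyH H"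
        using i1 t unfolding polyH_def by (simp add: matrix_vector_mult_scaleR)
      moreover have "x1 t - x2 t = (\<eta>w *\<^sub>R (x1 t - x2 t)) /\<^sub>R \<eta>w" using eta_w_pos by simp
      ultimately show "x1 t - x2 t \<in> (\<lambda>x. x /\<^sub>R \<eta>w) ` polyH H" by (rule rev_image_eqI)
    qed
  qed
  have P2: "\<forall>w1 w2 x1 x2 t. is_solution f B w1 x1 \<and> is_solution f B w2 x2 \<and> t \<ge> 0 \<and>
         x1 t - x2 t \<in> (\<lambda>x. x /\<^sub>R \<eta>w) ` polyH H \<longrightarrow>
         vnorm_inf (C *v x1 t - C *v x2 t) \<le> \<eta>z / \<eta>w"
  proof (intro allI impI)
    fix w1 w2 x1 x2 and t :: real
    assume a: "is_solution f B w1 x1 \<and> is_solution f B w2 x2 \<and> t \<ge> 0 \<and>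
         x1 t - x2 t \<in> (\<lambda>x. x /\<^sub>R \<eta>w) ` polyH H"
    then obtain x where x: "x \<in> polyH H" "x1 t - x2 t = x /\<^sub>R \<eta>w" by auto
    have "\<forall>j. (\<eta>w / 1) * (H *v (x1 t - x2 t)) $ j \<le> 1"
      using x eta_w_pos unfolding polyH_def by (simp add: matrix_vector_mult_scaleR mult.assoc[symmetric])
    hence "vnorm_inf (C *v (x1 t - x2 t)) \<le> \<eta>z * 1 / \<eta>w"
      by (intro out_bound[OF P_nonneg CPH P_one _ eta_w_pos]) auto
    thus "vnorm_inf (C *v x1 t - C *v x2 t) \<le> \<eta>z / \<eta>w" by (simp add: matrix_vector_mult_diff_distrib)
  qed
  have etaz: "\<eta>z \<ge> 0"
  proof -
    obtain i :: "'z + 'z" where True by blast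
    have "\<eta>z = (P *v vec 1) $ i" using P_one[symmetric] by (metis vector_scaleR_component vec_component real_scaleR_def mult.right_neutral)
    also have "\<dots> = (\<Sum>k\<in>UNIV. P $ i $ k)" by (simp add: matrix_vector_mult_def)
    also have "\<dots> \<ge> 0" by (intro sum_nonneg P_nonneg)
    finally show ?thesis .
  qed
  have P3: "\<forall>w1 w2 x1 x2. is_solution f B w1 x1 \<and> is_solution f B w2 x2 \<and>
         in_Linf (\<lambda>t. w1 t - w2 t) \<longrightarrow>
         in_Linf (\<lambda>t. C *v x1 t - C *v x2 t) \<and>
         sig_norm_inf (\<lambda>t. C *v x1 t - C *v x2 t) \<le> \<eta>z / \<eta>w * sig_norm_inf (\<lambda>t. w1 t - w2 t)"
  proof (intro allI impI)
    fix w1 w2 x1 x2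
    assume a: "is_solution f B w1 x1 \<and> is_solution f B w2 x2 \<and> in_Linf (\<lambda>t. w1 t - w2 t)"
    define S where "S = sig_norm_inf (\<lambda>t. w1 t - w2 t)"
    have dw: "vnorm_inf (w1 t - w2 t) \<le> S" if "t \<ge> 0" for t
      unfolding S_def sig_norm_inf_def using a that unfolding in_Linf_def
      by (intro cSUP_upper) auto
    have S0: "S \<ge> 0" using dw[of 0] vnorm_inf_nonneg[of "w1 0 - w2 0"] by simp
    have zb: "vnorm_inf (C *v x1 t - C *v x2 t) \<le> \<eta>z / \<eta>w * S" if t: "t \<ge> 0" for t
    proof (rule lim_le)
      show "0 \<le> \<eta>z / \<eta>w" using etaz eta_w_pos by simp
      fix \<gamma> :: real assume g: "\<gamma> > S"
      hence gp: "\<gamma> > 0" using S0 by simp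
      have "\<forall>t\<ge>0. \<forall>j. (\<eta>w / \<gamma>) * (H *v (x1 t - x2 t)) $ j \<le> 1"
      proof (rule inv[OF gp])
        show "is_solution f B w1 x1" "is_solution f B w2 x2" using a by auto
        show "vnorm_inf (w1 t - w2 t) \<le> \<gamma>" if "t \<ge> 0" for t using dw[OF that] g by linarith
      qed
      hence "vnorm_inf (C *v (x1 t - x2 t)) \<le> \<eta>z * \<gamma> / \<eta>w"
        using t by (intro out_bound[OF P_nonneg CPH P_one gp eta_w_pos]) auto
      thus "vnorm_inf (C *v x1 t - C *v x2 t) \<le> \<eta>z / \<eta>w * \<gamma>" by (simp add: matrix_vector_mult_diff_distrib)
    qed
    show "in_Linf (\<lambda>t. C *v x1 t - C *v x2 t) \<and>
         sig_norm_inf (\<lambda>t. C *v x1 t - C *v x2 t) \<le> \<eta>z / \<eta>w * sig_norm_inf (\<lambda>t. w1 t - w2 t)"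
    proof
      show "in_Linf (\<lambda>t. C *v x1 t - C *v x2 t)" unfolding in_Linf_def
        using zb by (intro bdd_aboveI[of _ "\<eta>z / \<eta>w * S"]) auto
      show "sig_norm_inf (\<lambda>t. C *v x1 t - C *v x2 t) \<le> \<eta>z / \<eta>w * sig_norm_inf (\<lambda>t. w1 t - w2 t)"
        unfolding sig_norm_inf_def S_def[symmetric, unfolded sig_norm_inf_def]
        using zb by (intro cSUP_least) auto
    qed
  qed
  show ?thesis using P1 P2 P3 by blast
qed

end
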